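(* Let $m\geq 7$ and let $\mathfrak{X}=\{A_0,A_1,A_2\}$ be a non-symmetric class $2$ association scheme of order $m$ (so $A_0=I_m$ and $A_2=A_1^T$). Let $B_1$ be the $(2m+1)\times(2m+1)$ matrix defined from $A_1$ as in the context below, let $B_0=I_{2m+1}$ and $B_2=B_1^T$. Then $\mathfrak{Y}=\{B_0,B_1,B_2\}$ is a non-symmetric class $2$ association scheme of order $2m+1$, the automorphism group $\operatorname{Aut}(\mathfrak{Y})$ is intransitive on $\{1,\dots,2m+1\}$, and hence $\mathfrak{Y}$ is non-schurian. Moreover, $\operatorname{Aut}(\mathfrak{Y})\cong\operatorname{Aut}(\mathfrak{X})$.
   Context: An association scheme of order $N$ is a set $\{A_0,\dots,A_d\}$ of $N\times N$ $0/1$-matrices such that $A_0=I_N$, $\sum_i A_i=J_N$ (all-ones matrix), each $A_i^T$ is in the set, and each product $A_iA_j$ is a linear combination of the $A_k$; $d$ is its class. It is non-symmetric of class $2$ if $d=2$ and $A_1^T=A_2\neq A_1$. The automorphism group of $\{A_0,\dots,A_d\}$ is $\{\sigma\in S_N : P_\sigma^TA_iP_\sigma=A_i \text{ for all } i\}$, where $P_\sigma$ is the permutation matrix of $\sigma$. A scheme is schurian if it arises as the set of adjacency matrices of the orbitals (orbits on pairs $(x,y)$ under $(x,y)^g=(x^g,y^g)$) of a transitive permutation group on $\{1,\dots,N\}$. Definition of $B_1$ (with $n=m+1$, indices $1\le i,j\le n-1$): $(B_1)_{i,j}=(A_1)_{ij}$, $(B_1)_{i,n}=0$, $(B_1)_{i,n+j}=(A_0+A_1)_{ij}$;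 $(B_1)_{n,j}=1$, $(B_1)_{n,n}=0$, $(B_1)_{n,n+j}=0$; $(B_1)_{n+i,j}=(A_1)_{ij}$, $(B_1)_{n+i,n}=1$, $(B_1)_{n+i,n+j}=(A_2)_{ij}$. In block form, $B_1=\begin{bmatrix} A_1 & \mathbf{0} & A_0+A_1\\ \mathbf{1}^T & 0 & \mathbf{0}^T\\ A_1 & \mathbf{1} & A_2\end{bmatrix}$ with blocks indexed by $\{1,\dots,n-1\},\{n\},\{n+1,\dots,2n-1\}$. *)

theory Defs
  imports Complex_Main "HOL-Algebra.Sym_Groups"
begin

text \<open>Matrices of order N are functions nat => nat => real, with rows and
columns indexed by {1..N}; entries outside this range are ignored.
A family A :: nat => (nat => nat => real) together with a class d represents
the set {A 0, ..., A d}.\<close>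

type_synonym mat = "nat \<Rightarrow> nat \<Rightarrow> real"

definition assoc_scheme :: "nat \<Rightarrow> nat \<Rightarrow> (nat \<Rightarrow> mat) \<Rightarrow> bool" where
  "assoc_scheme N d A \<longleftrightarrow>
     (\<forall>i\<le>d. \<forall>x\<in>{1..N}. \<forall>y\<in>{1..N}. A i x y = 0 \<or> A i x y = 1) \<and>
     (\<forall>x\<in>{1..N}. \<forall>y\<in>{1..N}. A 0 x y = (if x = y then 1 else 0)) \<and>
     (\<forall>x\<in>{1..N}. \<forall>y\<in>{1..N}. (\<Sum>i\<le>d. A i x y) = 1) \<and>
     (\<forall>i\<le>d. \<exists>j\<le>d. \<forall>x\<in>{1..N}. \<forall>y\<in>{1..N}. A j x y = A i y x) \<and>
     (\<forall>i\<le>d. \<forall>j\<le>d. \<exists>c :: nat \<Rightarrow> real. \<forall>x\<in>{1..N}. \<forall>y\<in>{1..N}.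
         (\<Sum>z=1..N. A i x z * A j z y) = (\<Sum>k\<le>d. c k * A k x y))"

definition nonsym_class2_scheme :: "nat \<Rightarrow> (nat \<Rightarrow> mat) \<Rightarrow> bool" where
  "nonsym_class2_scheme N A \<longleftrightarrow>
     assoc_scheme N 2 A \<and>
     (\<forall>x\<in>{1..N}. \<forall>y\<in>{1..N}. A 2 x y = A 1 y x) \<and>
     (\<exists>x\<in>{1..N}. \<exists>y\<in>{1..N}. A 1 x y \<noteq> A 2 x y)"

definition perm_mat :: "(nat \<Rightarrow> nat) \<Rightarrow> mat" where
  "perm_mat \<sigma> u x = (if u = \<sigma> x then 1 else 0)"

text \<open>Automorphisms: sigma in S_N with P_sigma^T A_i P_sigma = A_i for all i.\<close>
definition aut_set :: "nat \<Rightarrow> nat \<Rightarrow> (nat \<Rightarrow> mat) \<Rightarrow> (nat \<Rightarrow> nat) set" where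
  "aut_set N d A = {\<sigma>. \<sigma> permutes {1..N} \<and>
     (\<forall>i\<le>d. \<forall>x\<in>{1..N}. \<forall>y\<in>{1..N}.
        (\<Sum>u=1..N. \<Sum>v=1..N. perm_mat \<sigma> u x * A i u v * perm_mat \<sigma> v y) = A i x y)}"

definition aut_group :: "nat \<Rightarrow> nat \<Rightarrow> (nat \<Rightarrow> mat) \<Rightarrow> (nat \<Rightarrow> nat) monoid" where
  "aut_group N d A = (sym_group N) \<lparr> carrier := aut_set N d A \<rparr>"

definition transitive_on :: "nat \<Rightarrow> (nat \<Rightarrow> nat) set \<Rightarrow> bool" where
  "transitive_on N G \<longleftrightarrow> (\<forall>x\<in>{1..N}. \<forall>y\<in>{1..N}. \<exists>g\<in>G. g x = y)"

definition mat_restr :: "nat \<Rightarrow> mat \<Rightarrow> mat" where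
  "mat_restr N M x y = (if x \<in> {1..N} \<and> y \<in> {1..N} then M x y else 0)"

definition orbital_mat :: "nat \<Rightarrow> (nat \<Rightarrow> nat) set \<Rightarrow> nat \<Rightarrow> nat \<Rightarrow> mat" where
  "orbital_mat N G a b x y =
     (if x \<in> {1..N} \<and> y \<in> {1..N} \<and> (\<exists>g\<in>G. g a = x \<and> g b = y) then 1 else 0)"

definition schurian :: "nat \<Rightarrow> nat \<Rightarrow> (nat \<Rightarrow> mat) \<Rightarrow> bool" where
  "schurian N d A \<longleftrightarrow>
     (\<exists>G. subgroup G (sym_group N) \<and> transitive_on N G \<and>
        {mat_restr N (A i) | i. i \<le> d} =
        {orbital_mat N G a b | a b. a \<in> {1..N} \<and> b \<in> {1..N}})"

definition B1 :: "nat \<Rightarrow> (nat \<Rightarrow> mat) \<Rightarrow> mat" where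
  "B1 m A x y =
     (let n = m + 1 in
      if x \<in> {1..m} then
        (if y \<in> {1..m} then A 1 x y
         else if y = n then 0
         else if y \<in> {n+1..n+m} then A 0 x (y - n) + A 1 x (y - n) else 0)
      else if x = n then
        (if y \<in> {1..m} then 1 else 0)
      else if x \<in> {n+1..n+m} then
        (if y \<in> {1..m} then A 1 (x - n) y
         else if y = n then 1
         else if y \<in> {n+1..n+m} then A 2 (x - n) (y - n) else 0)
      else 0)"

definition Bfam :: "nat \<Rightarrow> (nat \<Rightarrow> mat) \<Rightarrow> nat \<Rightarrow> mat" where
  "Bfam m A i =
     (if i = 0 then (\<lambda>x y. if x = y then 1 else 0)
      else if i = 1 then B1 m A
      else (\<lambda>x y. B1 m A y x))"

end

theory Submission
  imports Defs
begin

lemma sum3: "(\<Sum>i\<le>(2::nat). f i) = f 0 + f 1 + (f 2 :: real)"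
  by (simp add: numeral_2_eq_2 atMost_Suc)

lemma le2_cases: "(i::nat) \<le> 2 \<Longrightarrow> i = 0 \<or> i = 1 \<or> i = 2" by auto
lemma delta_r[simp]: "finite S \<Longrightarrow> (\<Sum>z\<in>S. f z * (if y = z then 1 else 0 :: real)) = (if y\<in>S then f y else 0)"
  by (simp add: if_distrib[of "\<lambda>t. f _ * t"] sum.delta cong: if_cong)
lemma delta_r'[simp]: "finite S \<Longrightarrow> (\<Sum>z\<in>S. f z * (if z = y then 1 else 0 :: real)) = (if y\<in>S then f y else 0)"
  by (simp add: if_distrib[of "\<lambda>t. f _ * t"] sum.delta' cong: if_cong)
lemma delta_l[simp]: "finite S \<Longrightarrow> (\<Sum>z\<in>S. (if y = z then 1 else 0 :: real) * f z) = (if y\<in>S then f y else 0)"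
  by (simp add: if_distrib[of "\<lambda>t. t * f _"] sum.delta cong: if_cong)
lemma delta_l'[simp]: "finite S \<Longrightarrow> (\<Sum>z\<in>S. (if z = y then 1 else 0 :: real) * f z) = (if y\<in>S then f y else 0)"
  by (simp add: if_distrib[of "\<lambda>t. t * f _"] sum.delta' cong: if_cong)

locale drt =
  fixes m :: nat and A :: "nat \<Rightarrow> mat" and k l :: real
  assumes a01: "\<And>x y. x\<in>{1..m} \<Longrightarrow> y\<in>{1..m} \<Longrightarrow> A 1 x y = 0 \<or> A 1 x y = 1"
  and A0: "\<And>x y. x\<in>{1..m} \<Longrightarrow> y\<in>{1..m} \<Longrightarrow> A 0 x y = (if x = y then 1 else 0)"
  and A2: "\<And>x y. x\<in>{1..m} \<Longrightarrow> y\<in>{1..m} \<Longrightarrow> A 2 x y = A 1 y x"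
  and adiag: "\<And>x. x\<in>{1..m} \<Longrightarrow> A 1 x x = 0"
  and anti: "\<And>x y. x\<in>{1..m} \<Longrightarrow> y\<in>{1..m} \<Longrightarrow> x \<noteq> y \<Longrightarrow> A 1 x y + A 1 y x = 1"
  and rows: "\<And>x. x\<in>{1..m} \<Longrightarrow> (\<Sum>z=1..m. A 1 x z) = k"
  and cols: "\<And>y. y\<in>{1..m} \<Longrightarrow> (\<Sum>z=1..m. A 1 z y) = k"
  and mk: "real m = 2*k+1"
  and sq: "\<And>x y. x\<in>{1..m} \<Longrightarrow> y\<in>{1..m} \<Longrightarrow> (\<Sum>z=1..m. A 1 x z * A 1 z y) = l * A 1 x y + (l+1) * A 1 y x"
  and kl: "k = 2*l+1"
  and k3: "k \<ge> 3"

lemma derive_drt: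
  assumes m7: "m \<ge> 7" and X: "nonsym_class2_scheme m A"
  shows "\<exists>k l. drt m A k l"
proof -
  let ?S = "{1..m}"
  have as: "assoc_scheme m 2 A" and A2: "\<And>x y. x\<in>?S \<Longrightarrow> y\<in>?S \<Longrightarrow> A 2 x y = A 1 y x"
    using X unfolding nonsym_class2_scheme_def by auto
  have ns: "\<exists>x\<in>?S. \<exists>y\<in>?S. A 1 x y \<noteq> A 2 x y"
    using X unfolding nonsym_class2_scheme_def by blast
  have h01: "\<And>i x y. i \<le> 2 \<Longrightarrow> x\<in>?S \<Longrightarrow> y\<in>?S \<Longrightarrow> A i x y = 0 \<or> A i x y = 1"
    and A0: "\<And>x y. x\<in>?S \<Longrightarrow> y\<in>?S \<Longrightarrow> A 0 x y = (if x = y then 1 else 0)"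
    and hsum: "\<And>x y. x\<in>?S \<Longrightarrow> y\<in>?S \<Longrightarrow> (\<Sum>i\<le>2. A i x y) = 1"
    and hprod: "\<And>i j. i \<le> 2 \<Longrightarrow> j \<le> 2 \<Longrightarrow> \<exists>c :: nat \<Rightarrow> real. \<forall>x\<in>?S. \<forall>y\<in>?S.
         (\<Sum>z=1..m. A i x z * A j z y) = (\<Sum>k\<le>2. c k * A k x y)"
    using as unfolding assoc_scheme_def by blast+
  have a01: "\<And>x y. x\<in>?S \<Longrightarrow> y\<in>?S \<Longrightarrow> A 1 x y = 0 \<or> A 1 x y = 1"
    using h01[of 1] by auto
  have tot: "\<And>x y. x\<in>?S \<Longrightarrow> y\<in>?S \<Longrightarrow> A 0 x y + A 1 x y + A 1 y x = 1"
    using hsum A2 by (simp add: sum3)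
  have adiag: "\<And>x. x\<in>?S \<Longrightarrow> A 1 x x = 0"
    using tot A0 by fastforce
  have anti: "\<And>x y. x\<in>?S \<Longrightarrow> y\<in>?S \<Longrightarrow> x \<noteq> y \<Longrightarrow> A 1 x y + A 1 y x = 1"
    using tot A0 by fastforce
  have sqa: "\<And>x y. x\<in>?S \<Longrightarrow> y\<in>?S \<Longrightarrow> A 1 x y * A 1 x y = A 1 x y"
    using a01 by fastforce
  obtain c where c: "\<forall>x\<in>?S. \<forall>y\<in>?S. (\<Sum>z=1..m. A 1 x z * A 2 z y) = (\<Sum>k\<le>2. c k * A k x y)"
    using hprod[of 1 2] by auto
  have rows: "(\<Sum>z=1..m. A 1 x z) = c 0" if x: "x\<in>?S" for x
  proof -
    have "(\<Sum>z=1..m. A 1 x z) = (\<Sum>z=1..m. A 1 x z * A 2 z x)"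
      by (rule sum.cong) (use x A2 sqa in auto)
    also have "\<dots> = c 0" using c x A0 A2 adiag by (simp add: sum3)
    finally show ?thesis .
  qed
  obtain d where d: "\<forall>x\<in>?S. \<forall>y\<in>?S. (\<Sum>z=1..m. A 2 x z * A 1 z y) = (\<Sum>k\<le>2. d k * A k x y)"
    using hprod[of 2 1] by auto
  have cols: "(\<Sum>z=1..m. A 1 z x) = d 0" if x: "x\<in>?S" for x
  proof -
    have "(\<Sum>z=1..m. A 1 z x) = (\<Sum>z=1..m. A 2 x z * A 1 z x)"
      by (rule sum.cong) (use x A2 sqa in auto)
    also have "\<dots> = d 0" using d x A0 A2 adiag by (simp add: sum3)
    finally show ?thesis .
  qed
  have "(\<Sum>x=1..m. \<Sum>z=1..m. A 1 x z) = (\<Sum>z=1..m. \<Sum>x=1..m. A 1 x z)"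
    by (rule sum.swap)
  hence "real m * c 0 = real m * d 0" using rows cols by simp
  hence cd: "c 0 = d 0" using m7 by simp
  have "(\<Sum>z=1..m. A 1 x z) + (\<Sum>z=1..m. A 1 z x) = real m - 1" if x: "x \<in> ?S" for x
  proof -
    have "(\<Sum>z=1..m. A 1 x z) + (\<Sum>z=1..m. A 1 z x) = (\<Sum>z=1..m. A 1 x z + A 1 z x)"
      by (simp add: sum.distrib)
    also have "\<dots> = (\<Sum>z=1..m. 1 - (if z = x then 1 else 0))"
      by (rule sum.cong) (use x anti adiag in auto)
    also have "\<dots> = real m - 1" using x by (simp add: sum_subtractf)
    finally show ?thesis .
  qed
  hence mk: "real m = 2 * c 0 + 1" using rows cols cd m7
    by (metis (no_types, lifting) atLeastAtMost_iff diff_add_cancel le_numeral_extra(2) mult_2 order_trans one_le_numeral)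
  define k where "k = c 0"
  obtain e where e: "\<forall>x\<in>?S. \<forall>y\<in>?S. (\<Sum>z=1..m. A 1 x z * A 1 z y) = (\<Sum>k\<le>2. e k * A k x y)"
    using hprod[of 1 1] by auto
  have one: "1 \<in> ?S" using m7 by simp
  have "(\<Sum>z=1..m. A 1 1 z * A 1 z 1) = 0"
  proof (rule sum.neutral, rule ballI)
    fix z assume z: "z \<in> ?S"
    show "A 1 1 z * A 1 z 1 = 0"
    proof (cases "z = 1")
      case True then show ?thesis using adiag one by simp
    next
      case False then show ?thesis using anti[OF one z] a01[OF one z] by auto
    qed
  qed
  hence e0: "e 0 = 0" using e one A0 A2 adiag by (simp add: sum3)
  have sqe: "(\<Sum>z=1..m. A 1 x z * A 1 z y) = e 1 * A 1 x y + e 2 * A 1 y x"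
    if "x\<in>?S" "y\<in>?S" for x y using e that A2 e0 by (simp add: sum3)
  have tr: "A 1 y z = 1 - A 1 z y - (if y = z then 1 else 0)" if "y\<in>?S" "z\<in>?S" for y z
    using anti[OF that] adiag that by (cases "y = z") auto
  have ab: "(\<Sum>z=1..m. A 1 x z * A 1 y z) = k - A 1 x y - (e 1 * A 1 x y + e 2 * A 1 y x)"
    if x: "x\<in>?S" and y: "y\<in>?S" for x y
  proof -
    have "(\<Sum>z=1..m. A 1 x z * A 1 y z) = (\<Sum>z=1..m. A 1 x z - A 1 x z * A 1 z y - A 1 x z * (if y = z then 1 else 0))"
    proof (rule sum.cong[OF refl])
      fix z assume z: "z \<in> {1..m}"
      have h: "A 1 y z = 1 - A 1 z y - (if y = z then 1 else 0)" using tr y z by blast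
      show "A 1 x z * A 1 y z = A 1 x z - A 1 x z * A 1 z y - A 1 x z * (if y = z then 1 else 0)"
        by (simp only: h) (simp add: algebra_simps)
    qed
    also have "\<dots> = k - A 1 x y - (e 1 * A 1 x y + e 2 * A 1 y x)"
      using x y rows sqe by (simp add: sum_subtractf k_def)
    finally show ?thesis .
  qed
  obtain x0 y0 where x0: "x0\<in>?S" and y0: "y0\<in>?S" and ne: "A 1 x0 y0 \<noteq> A 1 y0 x0"
    using ns A2 by auto
  have "x0 \<noteq> y0" using ne by auto
  hence cases: "(A 1 x0 y0 = 1 \<and> A 1 y0 x0 = 0) \<or> (A 1 x0 y0 = 0 \<and> A 1 y0 x0 = 1)"
    using anti[OF x0 y0] a01[OF x0 y0] by auto
  have "(\<Sum>z=1..m. A 1 x0 z * A 1 y0 z) = (\<Sum>z=1..m. A 1 y0 z * A 1 x0 z)"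
    by (simp add: mult.commute)
  hence e2: "e 2 = e 1 + 1" using ab[OF x0 y0] ab[OF y0 x0] cases by auto
  have rs: "(\<Sum>y=1..m. \<Sum>z=1..m. A 1 x z * A 1 z y) = k * k" if x: "x\<in>?S" for x
  proof -
    have "(\<Sum>y=1..m. \<Sum>z=1..m. A 1 x z * A 1 z y) = (\<Sum>z=1..m. \<Sum>y=1..m. A 1 x z * A 1 z y)"
      by (rule sum.swap)
    also have "\<dots> = (\<Sum>z=1..m. A 1 x z * k)"
          proof (rule sum.cong[OF refl])
      fix z assume z: "z\<in>{1..m}"
      have "(\<Sum>y=1..m. A 1 x z * A 1 z y) = A 1 x z * (\<Sum>y=1..m. A 1 z y)" by (simp add: sum_distrib_left)
      also have "\<dots> = A 1 x z * k" using rows[OF z] k_def by simp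
      finally show "(\<Sum>y=1..m. A 1 x z * A 1 z y) = A 1 x z * k" .
    qed
    also have "\<dots> = k * k" using rows x by (simp add: sum_distrib_right[symmetric] k_def)
    finally show ?thesis .
  qed
  have "(\<Sum>y=1..m. \<Sum>z=1..m. A 1 1 z * A 1 z y) = (\<Sum>y=1..m. e 1 * A 1 1 y + e 2 * A 1 y 1)"
    by (rule sum.cong) (use sqe one in auto)
  also have "\<dots> = e 1 * k + e 2 * k"
    using one rows cols cd by (simp add: sum.distrib sum_distrib_left[symmetric] k_def)
  finally have "k * k = k * (2 * e 1 + 1)" using rs[OF one] e2 by (simp add: algebra_simps)
  moreover have k3: "k \<ge> 3" using mk m7 k_def by simp
  ultimately have kl: "k = 2 * e 1 + 1" by simp
  have "drt m A k (e 1)"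
    apply unfold_locales
    using a01 A0 A2 adiag anti rows cols cd mk kl k3 sqe e2 by (auto simp: k_def)
  thus ?thesis by blast
qed



lemma tourn_scheme:
  fixes N :: nat and B :: mat and K L :: real
  assumes b01: "\<And>x y. x\<in>{1..N} \<Longrightarrow> y\<in>{1..N} \<Longrightarrow> B x y = 0 \<or> B x y = 1"
  and bdiag: "\<And>x. x\<in>{1..N} \<Longrightarrow> B x x = 0"
  and banti: "\<And>x y. x\<in>{1..N} \<Longrightarrow> y\<in>{1..N} \<Longrightarrow> x \<noteq> y \<Longrightarrow> B x y + B y x = 1"
  and brows: "\<And>x. x\<in>{1..N} \<Longrightarrow> (\<Sum>z=1..N. B x z) = K"
  and bcols: "\<And>y. y\<in>{1..N} \<Longrightarrow> (\<Sum>z=1..N. B z y) = K"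
  and bsq: "\<And>x y. x\<in>{1..N} \<Longrightarrow> y\<in>{1..N} \<Longrightarrow> (\<Sum>z=1..N. B x z * B z y) = L * B x y + (L+1) * B y x"
  shows "assoc_scheme N 2 (\<lambda>i. if i = 0 then (\<lambda>x y. if x = y then 1 else 0) else if i = 1 then B else (\<lambda>x y. B y x))"
    (is "assoc_scheme N 2 ?F")
proof -
  let ?S = "{1..N}"
  have F0: "?F 0 = (\<lambda>x y. if x = y then 1 else 0)" and F1: "?F 1 = B" and F2: "?F 2 = (\<lambda>x y. B y x)"
    by auto
  have tr: "B y z = 1 - B z y - (if y = z then 1 else 0)" if "y\<in>?S" "z\<in>?S" for y z
    using banti[OF that] bdiag that by (cases "y = z") auto
  have p12: "(\<Sum>z=1..N. B x z * B y z) = K - B x y - (L * B x y + (L+1) * B y x)"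
    if x: "x\<in>?S" and y: "y\<in>?S" for x y
  proof -
    have "(\<Sum>z=1..N. B x z * B y z) = (\<Sum>z=1..N. B x z - B x z * B z y - B x z * (if y = z then 1 else 0))"
    proof (rule sum.cong[OF refl])
      fix z assume z: "z \<in> ?S"
      have h: "B y z = 1 - B z y - (if y = z then 1 else 0)" using tr y z by blast
      show "B x z * B y z = B x z - B x z * B z y - B x z * (if y = z then 1 else 0)"
        by (simp only: h) (simp add: algebra_simps)
    qed
    also have "\<dots> = K - B x y - (L * B x y + (L+1) * B y x)"
      using x y brows bsq by (simp add: sum_subtractf)
    finally show ?thesis .
  qed
  have p21: "(\<Sum>z=1..N. B z x * B z y) = K - B x y - (L * B x y + (L+1) * B y x)"
    if x: "x\<in>?S" and y: "y\<in>?S" for x y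
  proof -
    have "(\<Sum>z=1..N. B z x * B z y) = (\<Sum>z=1..N. B z y - B x z * B z y - (if x = z then 1 else 0) * B z y)"
    proof (rule sum.cong[OF refl])
      fix z assume z: "z \<in> ?S"
      have h: "B z x = 1 - B x z - (if x = z then 1 else 0)" using tr[OF z x] by (cases "x = z") auto
      show "B z x * B z y = B z y - B x z * B z y - (if x = z then 1 else 0) * B z y"
        by (simp only: h) (simp add: algebra_simps)
    qed
    also have "\<dots> = K - B x y - (L * B x y + (L+1) * B y x)"
      using x y bcols bsq by (simp add: sum_subtractf)
    finally show ?thesis .
  qed
  have off: "K - B x y - (L * B x y + (L+1) * B y x) = K * (if x = y then 1 else 0) + (K-L-1) * B x y + (K-L-1) * B y x"
    if x: "x\<in>?S" and y: "y\<in>?S" for x y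
  proof (cases "x = y")
    case True thus ?thesis using bdiag x by simp
  next
    case False
    have h: "B y x = 1 - B x y" using banti[OF x y] False by simp
    show ?thesis using False by (simp add: h algebra_simps)
  qed
  show ?thesis
    unfolding assoc_scheme_def
  proof (intro conjI ballI allI impI)
    fix i :: nat and x y assume i: "i \<le> 2" and x: "x\<in>?S" and y: "y\<in>?S"
    show "?F i x y = 0 \<or> ?F i x y = 1" using le2_cases[OF i] b01 x y by auto
  next
    fix x y assume x: "x\<in>?S" and y: "y\<in>?S"
    show "?F 0 x y = (if x = y then 1 else 0)" by simp
  next
    fix x y assume x: "x\<in>?S" and y: "y\<in>?S"
    show "(\<Sum>i\<le>2. ?F i x y) = 1"
      using banti[OF x y] bdiag x by (simp add: sum3)
  next
    fix i :: nat assume i: "i \<le> 2"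
    show "\<exists>j\<le>2. \<forall>x\<in>?S. \<forall>y\<in>?S. ?F j x y = ?F i y x"
    proof -
      consider "i = 0" | "i = 1" | "i = 2" using le2_cases[OF i] by blast
      thus ?thesis
      proof cases
        case 1 thus ?thesis by (intro exI[of _ 0]) auto
      next
        case 2 thus ?thesis by (intro exI[of _ 2]) auto
      next
        case 3 thus ?thesis by (intro exI[of _ 1]) auto
      qed
    qed
  next
    fix i j :: nat assume i: "i \<le> 2" and j: "j \<le> 2"
    show "\<exists>c :: nat \<Rightarrow> real. \<forall>x\<in>?S. \<forall>y\<in>?S.
         (\<Sum>z=1..N. ?F i x z * ?F j z y) = (\<Sum>k\<le>2. c k * ?F k x y)"
    proof -
      consider "i = 0" | "j = 0" | "i = 1 \<and> j = 1" | "i = 1 \<and> j = 2" | "i = 2 \<and> j = 1" | "i = 2 \<and> j = 2"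
        using le2_cases[OF i] le2_cases[OF j] by blast
      thus ?thesis
      proof cases
        case 1
        show ?thesis
        proof (intro exI[of _ "\<lambda>r. if r = j then 1 else 0"] ballI)
          fix x y assume x: "x\<in>?S" and y: "y\<in>?S"
          show "(\<Sum>z=1..N. ?F i x z * ?F j z y) = (\<Sum>k\<le>2. (if k = j then 1 else 0) * ?F k x y)"
            using le2_cases[OF j] 1 x by (elim disjE) (simp_all add: sum3)
        qed
      next
        case 2
        show ?thesis
        proof (intro exI[of _ "\<lambda>r. if r = i then 1 else 0"] ballI)
          fix x y assume x: "x\<in>?S" and y: "y\<in>?S"
          show "(\<Sum>z=1..N. ?F i x z * ?F j z y) = (\<Sum>k\<le>2. (if k = i then 1 else 0) * ?F k x y)"
            using le2_cases[OF i] 2 y by (elim disjE) (simp_all add: sum3)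
        qed
      next
        case 3
        show ?thesis
        proof (intro exI[of _ "\<lambda>r. if r = 0 then 0 else if r = 1 then L else L+1"] ballI)
          fix x y assume x: "x\<in>?S" and y: "y\<in>?S"
          show "(\<Sum>z=1..N. ?F i x z * ?F j z y) = (\<Sum>k\<le>2. (if k = 0 then 0 else if k = 1 then L else L+1) * ?F k x y)"
            using 3 bsq[OF x y] by (simp add: sum3)
        qed
      next
        case 4
        show ?thesis
        proof (intro exI[of _ "\<lambda>r. if r = 0 then K else K-L-1"] ballI)
          fix x y assume x: "x\<in>?S" and y: "y\<in>?S"
          show "(\<Sum>z=1..N. ?F i x z * ?F j z y) = (\<Sum>k\<le>2. (if k = 0 then K else K-L-1) * ?F k x y)"
            using 4 p12[OF x y] off[OF x y] by (simp add: sum3)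
        qed
      next
        case 5
        show ?thesis
        proof (intro exI[of _ "\<lambda>r. if r = 0 then K else K-L-1"] ballI)
          fix x y assume x: "x\<in>?S" and y: "y\<in>?S"
          show "(\<Sum>z=1..N. ?F i x z * ?F j z y) = (\<Sum>k\<le>2. (if k = 0 then K else K-L-1) * ?F k x y)"
            using 5 p21[OF x y] off[OF x y] by (simp add: sum3)
        qed
      next
        case 6
        show ?thesis
        proof (intro exI[of _ "\<lambda>r. if r = 0 then 0 else if r = 1 then L+1 else L"] ballI)
          fix x y assume x: "x\<in>?S" and y: "y\<in>?S"
          have "(\<Sum>z=1..N. B z x * B y z) = (\<Sum>z=1..N. B y z * B z x)" by (simp add: mult.commute)
          thus "(\<Sum>z=1..N. ?F i x z * ?F j z y) = (\<Sum>k\<le>2. (if k = 0 then 0 else if k = 1 then L+1 else L) * ?F k x y)"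
            using 6 bsq[OF y x] by (simp add: sum3)
        qed
      qed
    qed
  qed
qed



definition c3 :: "nat \<Rightarrow> nat \<Rightarrow> nat" where "c3 m j = Suc m + j"

lemma c3_inj[simp]: "c3 m i = c3 m j \<longleftrightarrow> i = j" by (simp add: c3_def)
lemma c3_ne_n[simp]: "j \<in> {1..m} \<Longrightarrow> c3 m j \<noteq> Suc m" "j \<in> {1..m} \<Longrightarrow> Suc m \<noteq> c3 m j" by (auto simp: c3_def)
lemma c3_notin[simp]: "c3 m j \<notin> {1..m}" by (auto simp: c3_def)
lemma c3_ne_b1[simp]: "i \<in> {1..m} \<Longrightarrow> c3 m j \<noteq> i" "i \<in> {1..m} \<Longrightarrow> i \<noteq> c3 m j" by (auto simp: c3_def)
lemma n_notin[simp]: "Suc (m::nat) \<notin> {1..m}" by auto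
lemma n_ne_b1[simp]: "i \<in> {1..m::nat} \<Longrightarrow> Suc m \<noteq> i" "i \<in> {1..m} \<Longrightarrow> i \<noteq> Suc m" by auto
lemma c3_in[simp]: "j \<in> {1..m} \<Longrightarrow> c3 m j \<in> {1..2*m+1}" by (auto simp: c3_def)
lemma c3_ge[simp]: "Suc 0 \<le> c3 m j" by (simp add: c3_def)
lemma c3_le[simp]: "c3 m j \<le> Suc (2 * m) \<longleftrightarrow> j \<le> m" by (simp add: c3_def)
lemma n_in[simp]: "Suc (m::nat) \<in> {1..2*m+1}" by auto
lemma b1_in[simp]: "i \<in> {1..m::nat} \<Longrightarrow> i \<in> {1..2*m+1}" by auto

lemma vcases: assumes "x \<in> {1..2*m+1}"
  obtains (b1) "x \<in> {1..m}" | (n) "x = Suc m" | (b3) i where "i \<in> {1..m}" "x = c3 m i"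
proof -
  consider "x \<le> m" | "x = Suc m" | "x > Suc m" by linarith
  thus ?thesis
  proof cases
    case 1 thus ?thesis using assms b1 by auto
  next
    case 2 thus ?thesis using n by auto
  next
    case 3
    with assms have "x - Suc m \<in> {1..m}" "x = c3 m (x - Suc m)" by (auto simp: c3_def)
    thus ?thesis by (rule b3)
  qed
qed

lemma range_split: "{1..2*m+1} = {1..m} \<union> {Suc m} \<union> c3 m ` {1..m}"
proof
  show "{1..2*m+1} \<subseteq> {1..m} \<union> {Suc m} \<union> c3 m ` {1..m}"
  proof
    fix x assume "x \<in> {1..2*m+1}"
    thus "x \<in> {1..m} \<union> {Suc m} \<union> c3 m ` {1..m}" by (cases rule: vcases) auto
  qed
qed (auto simp: c3_def)

lemma sum_split: "(\<Sum>z=1..2*m+1. f z) = (\<Sum>z=1..m. f z) + f (Suc m) + (\<Sum>z=1..m. f (c3 m z))"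
proof -
  have "(\<Sum>z=1..2*m+1. f z) = (\<Sum>z\<in>{1..m} \<union> {Suc m} \<union> c3 m ` {1..m}. f z)"
    by (simp only: range_split)
  also have "\<dots> = (\<Sum>z\<in>{1..m} \<union> {Suc m}. f z) + (\<Sum>z\<in>c3 m ` {1..m}. f z)"
    by (rule sum.union_disjoint) (auto simp: c3_def)
  also have "(\<Sum>z\<in>c3 m ` {1..m}. f z) = (\<Sum>z=1..m. f (c3 m z))"
    by (rule sum.reindex_cong[of "c3 m"]) (auto intro: inj_onI)
  also have "(\<Sum>z\<in>{1..m} \<union> {Suc m}. f z) = (\<Sum>z=1..m. f z) + f (Suc m)"
    by (subst sum.union_disjoint) auto
  finally show ?thesis .
qed

context drt begin

lemma pcases: assumes "i \<in> {1..m}" "j \<in> {1..m}"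
  obtains (eq) "i = j" | (lt) "i \<noteq> j" "A 1 i j = 1" "A 1 j i = 0" | (gt) "i \<noteq> j" "A 1 i j = 0" "A 1 j i = 1"
  using a01[OF assms] anti[OF assms] by (cases "i = j") auto

lemma B11[simp]: "i \<in> {1..m} \<Longrightarrow> j \<in> {1..m} \<Longrightarrow> B1 m A i j = A 1 i j"
  by (simp add: B1_def)
lemma B1n[simp]: "i \<in> {1..m} \<Longrightarrow> B1 m A i (Suc m) = 0"
  by (simp add: B1_def)
lemma B13[simp]: "i \<in> {1..m} \<Longrightarrow> j \<in> {1..m} \<Longrightarrow> B1 m A i (c3 m j) = (if i = j then 1 else 0) + A 1 i j"
  using A0[of i j] by (auto simp add: B1_def c3_def)
lemma Bn1[simp]: "j \<in> {1..m} \<Longrightarrow> B1 m A (Suc m) j = 1"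
  by (simp add: B1_def)
lemma Bnn[simp]: "B1 m A (Suc m) (Suc m) = 0"
  by (simp add: B1_def)
lemma Bn3[simp]: "j \<in> {1..m} \<Longrightarrow> B1 m A (Suc m) (c3 m j) = 0"
  by (auto simp add: B1_def c3_def)
lemma B31[simp]: "i \<in> {1..m} \<Longrightarrow> j \<in> {1..m} \<Longrightarrow> B1 m A (c3 m i) j = A 1 i j"
  by (auto simp add: B1_def c3_def)
lemma B3n[simp]: "i \<in> {1..m} \<Longrightarrow> B1 m A (c3 m i) (Suc m) = 1"
  by (auto simp add: B1_def c3_def)
lemma B33[simp]: "i \<in> {1..m} \<Longrightarrow> j \<in> {1..m} \<Longrightarrow> B1 m A (c3 m i) (c3 m j) = A 1 j i"
  using A2[of i j] by (auto simp add: B1_def c3_def)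

end


context drt begin

lemmas adiag_s[simp] = adiag[simplified]
lemmas rows_s[simp] = rows[simplified]
lemmas cols_s[simp] = cols[simplified]
lemmas sq_s[simp] = sq[simplified]

lemma trA: "y\<in>{1..m} \<Longrightarrow> z\<in>{1..m} \<Longrightarrow> A 1 y z = 1 - A 1 z y - (if y = z then 1 else 0)"
  using anti adiag by (cases "y = z") (auto simp: algebra_simps)

lemma abA: assumes x: "x\<in>{1..m}" and y: "y\<in>{1..m}"
  shows "(\<Sum>z=1..m. A 1 x z * A 1 y z) = (if x = y then k else l)"
proof -
  have "(\<Sum>z=1..m. A 1 x z * A 1 y z) = (\<Sum>z=1..m. A 1 x z - A 1 x z * A 1 z y - A 1 x z * (if y = z then 1 else 0))"
  proof (rule sum.cong[OF refl])
    fix z assume z: "z \<in> {1..m}"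
    have h: "A 1 y z = 1 - A 1 z y - (if y = z then 1 else 0)" using trA y z by blast
    show "A 1 x z * A 1 y z = A 1 x z - A 1 x z * A 1 z y - A 1 x z * (if y = z then 1 else 0)"
      by (simp only: h) (simp add: algebra_simps)
  qed
  also have "\<dots> = k - A 1 x y - (l * A 1 x y + (l+1) * A 1 y x)"
    using x y rows sq by (simp add: sum_subtractf)
  also have "\<dots> = (if x = y then k else l)"
    by (cases rule: pcases[OF x y]) (use x y in \<open>auto simp: kl\<close>)
  finally show ?thesis .
qed

lemma baA: assumes x: "x\<in>{1..m}" and y: "y\<in>{1..m}"
  shows "(\<Sum>z=1..m. A 1 z x * A 1 z y) = (if x = y then k else l)"
proof -
  have "(\<Sum>z=1..m. A 1 z x * A 1 z y) = (\<Sum>z=1..m. A 1 z y - A 1 x z * A 1 z y - (if x = z then 1 else 0) * A 1 z y)"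
  proof (rule sum.cong[OF refl])
    fix z assume z: "z \<in> {1..m}"
    have h: "A 1 z x = 1 - A 1 x z - (if x = z then 1 else 0)" using trA[OF z x] by (cases "x = z") auto
    show "A 1 z x * A 1 z y = A 1 z y - A 1 x z * A 1 z y - (if x = z then 1 else 0) * A 1 z y"
      by (simp only: h) (simp add: algebra_simps)
  qed
  also have "\<dots> = k - A 1 x y - (l * A 1 x y + (l+1) * A 1 y x)"
    using x y cols sq by (simp add: sum_subtractf)
  also have "\<dots> = (if x = y then k else l)"
    by (cases rule: pcases[OF x y]) (use x y in \<open>auto simp: kl\<close>)
  finally show ?thesis .
qed

lemma sqA': "x\<in>{1..m} \<Longrightarrow> y\<in>{1..m} \<Longrightarrow> (\<Sum>z=1..m. A 1 z y * A 1 x z) = l * A 1 x y + (l+1) * A 1 y x"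
proof -
  assume "x\<in>{1..m}" "y\<in>{1..m}"
  moreover have "(\<Sum>z=1..m. A 1 z y * A 1 x z) = (\<Sum>z=1..m. A 1 x z * A 1 z y)" by (simp add: mult.commute)
  ultimately show ?thesis using sq by simp
qed

lemmas abA_s[simp] = abA[simplified]
lemmas baA_s[simp] = baA[simplified]
lemmas sqA'_s[simp] = sqA'[simplified]


abbreviation "N \<equiv> 2*m+1"

lemma B01: assumes x: "x\<in>{1..N}" and y: "y\<in>{1..N}" shows "B1 m A x y = 0 \<or> B1 m A x y = 1"
proof (cases rule: vcases[OF x, case_names b1 n b3])
  case b1 thus ?thesis by (cases rule: vcases[OF y, case_names b1 n b3]) (use a01 in auto)
next
  case n thus ?thesis by (cases rule: vcases[OF y, case_names b1 n b3]) (use a01 in auto)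
next
  case (b3 i) thus ?thesis by (cases rule: vcases[OF y, case_names b1 n b3]) (use a01 in \<open>auto dest: a01\<close>)
qed

lemma Bdiag: assumes x: "x\<in>{1..N}" shows "B1 m A x x = 0"
  by (cases rule: vcases[OF x, case_names b1 n b3]) auto

lemma Banti: assumes x: "x\<in>{1..N}" and y: "y\<in>{1..N}" and ne: "x \<noteq> y"
  shows "B1 m A x y + B1 m A y x = 1"
proof (cases rule: vcases[OF x, case_names b1 n b3])
  case b1
  thus ?thesis
  proof (cases rule: vcases[OF y, case_names b1 n b3])
    case b1 thus ?thesis using \<open>x\<in>{1..m}\<close> anti ne by simp
  next
    case (b3 j) thus ?thesis using \<open>x\<in>{1..m}\<close> trA[of x j] by (cases "x = j") auto
  qed auto
next
  case n thus ?thesis by (cases rule: vcases[OF y, case_names b1 n b3]) (use ne in auto)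
next
  case (b3 i)
  thus ?thesis
  proof (cases rule: vcases[OF y, case_names b1 n b3])
    case b1 thus ?thesis using b3 trA[of y i] by (cases "y = i") auto
  next
    case (b3 j) thus ?thesis using \<open>i\<in>{1..m}\<close> \<open>x = c3 m i\<close> anti[of i j] ne by (auto simp: add.commute)
  qed (use b3 in auto)
qed

lemma Brows: assumes x: "x\<in>{1..N}" shows "(\<Sum>z=1..N. B1 m A x z) = real m"
proof (cases rule: vcases[OF x, case_names b1 n b3])
  case b1
  have "(\<Sum>z=1..m. B1 m A x (c3 m z)) = (\<Sum>z=1..m. (if x = z then 1 else 0) + A 1 x z)"
    by (rule sum.cong) (use b1 in auto)
  moreover have "(\<Sum>z=1..m. B1 m A x z) = (\<Sum>z=1..m. A 1 x z)"
    by (rule sum.cong) (use b1 in auto)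
  ultimately show ?thesis using b1 rows mk by (simp only: sum_split) (simp add: sum.distrib)
next
  case n thus ?thesis by (simp only: sum_split) simp
next
  case (b3 i)
  have "(\<Sum>z=1..m. B1 m A x (c3 m z)) = (\<Sum>z=1..m. A 1 z i)"
    by (rule sum.cong) (use b3 in auto)
  moreover have "(\<Sum>z=1..m. B1 m A x z) = (\<Sum>z=1..m. A 1 i z)"
    by (rule sum.cong) (use b3 in auto)
  ultimately show ?thesis using b3 rows cols mk by (simp only: sum_split) simp
qed

lemma Bcols: assumes y: "y\<in>{1..N}" shows "(\<Sum>z=1..N. B1 m A z y) = real m"
proof (cases rule: vcases[OF y, case_names b1 n b3])
  case b1
  have "(\<Sum>z=1..m. B1 m A (c3 m z) y) = (\<Sum>z=1..m. A 1 z y)"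
    by (rule sum.cong) (use b1 in auto)
  moreover have "(\<Sum>z=1..m. B1 m A z y) = (\<Sum>z=1..m. A 1 z y)"
    by (rule sum.cong) (use b1 in auto)
  ultimately show ?thesis using b1 rows cols mk by (simp only: sum_split) simp
next
  case n thus ?thesis by (simp only: sum_split) simp
next
  case (b3 i)
  have "(\<Sum>z=1..m. B1 m A z y) = (\<Sum>z=1..m. (if z = i then 1 else 0) + A 1 z i)"
    by (rule sum.cong) (use b3 in auto)
  moreover have "(\<Sum>z=1..m. B1 m A (c3 m z) y) = (\<Sum>z=1..m. A 1 i z)"
    by (rule sum.cong) (use b3 in auto)
  ultimately show ?thesis using b3 rows cols mk by (simp only: sum_split) (simp add: sum.distrib)
qed

end


context drt begin

lemma Bsq: assumes x: "x\<in>{1..N}" and y: "y\<in>{1..N}"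
  shows "(\<Sum>z=1..N. B1 m A x z * B1 m A z y) = k * B1 m A x y + (k+1) * B1 m A y x"
proof (cases rule: vcases[OF x, case_names b1 n b3])
  case b1
  then show ?thesis
  proof (cases rule: vcases[OF y, case_names b1 n b3])
    case b1
    show ?thesis using \<open>x\<in>{1..m}\<close> b1
      by (simp only: sum_split) (cases rule: pcases[OF \<open>x\<in>{1..m}\<close> b1]; simp add: ring_distribs sum.distrib kl)
  next
    case n
    show ?thesis using \<open>x\<in>{1..m}\<close> n
      by (simp only: sum_split) (simp add: ring_distribs sum.distrib kl)
  next
    case (b3 j)
    show ?thesis using \<open>x\<in>{1..m}\<close> b3
      by (simp only: sum_split) (cases rule: pcases[OF \<open>x\<in>{1..m}\<close> \<open>j\<in>{1..m}\<close>]; simp add: ring_distribs sum.distrib kl)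
  qed
next
  case n
  then show ?thesis
  proof (cases rule: vcases[OF y, case_names b1 n b3])
    case b1
    show ?thesis using n b1
      by (simp only: sum_split) (simp add: ring_distribs sum.distrib kl)
  next
    case n
    show ?thesis using \<open>x = Suc m\<close> n
      by (simp only: sum_split) (simp add: ring_distribs sum.distrib kl)
  next
    case (b3 j)
    show ?thesis using n b3
      by (simp only: sum_split) (simp add: ring_distribs sum.distrib kl)
  qed
next
  case (b3 i)
  then show ?thesis
  proof (cases rule: vcases[OF y, case_names b1 n b3])
    case b1
    show ?thesis using b3 b1
      by (simp only: sum_split) (cases rule: pcases[OF \<open>i\<in>{1..m}\<close> b1]; simp add: ring_distribs sum.distrib kl)
  next
    case n
    show ?thesis using b3 n
      by (simp only: sum_split) (simp add: ring_distribs sum.distrib kl)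
  next
    case (b3 j)
    show ?thesis using \<open>i\<in>{1..m}\<close> \<open>x = c3 m i\<close> b3
      by (simp only: sum_split) (cases rule: pcases[OF \<open>i\<in>{1..m}\<close> \<open>j\<in>{1..m}\<close>]; simp add: ring_distribs sum.distrib kl)
  qed
qed

end


context drt begin

lemma Bfam_eq: "Bfam m A = (\<lambda>i. if i = 0 then (\<lambda>x y. if x = y then 1 else 0) else if i = 1 then B1 m A else (\<lambda>x y. B1 m A y x))"
  by (rule ext) (simp add: Bfam_def)

lemma Y_scheme: "nonsym_class2_scheme N (Bfam m A)"
proof -
  have "assoc_scheme N 2 (Bfam m A)"
    unfolding Bfam_eq
    by (rule tourn_scheme[where K="real m" and L=k]) (use B01 Bdiag Banti Brows Bcols Bsq in auto)
  moreover have "\<exists>x\<in>{1..N}. \<exists>y\<in>{1..N}. Bfam m A 1 x y \<noteq> Bfam m A 2 x y"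
  proof (intro bexI)
    show "Bfam m A 1 (Suc m) 1 \<noteq> Bfam m A 2 (Suc m) 1" using k3 mk by (simp add: Bfam_def)
  qed (use k3 mk in auto)
  ultimately show ?thesis unfolding nonsym_class2_scheme_def by (simp add: Bfam_def)
qed

definition R :: "nat \<Rightarrow> nat \<Rightarrow> bool" where "R x y \<longleftrightarrow> B1 m A x y = 1"

definition Pv :: "nat \<Rightarrow> bool" where
  "Pv v \<longleftrightarrow> (\<forall>u\<in>{1..N}. R u v \<longrightarrow> (\<exists>w\<in>{1..N}. R v w \<and> R w u \<and>
     (\<forall>z\<in>{1..N}. R v z \<longrightarrow> (R z u \<longleftrightarrow> z = w \<or> R z w))))"

lemma P_n: "Pv (Suc m)"
  unfolding Pv_def
proof (intro ballI impI)
  fix u assume u: "u \<in> {1..N}" and Ru: "R u (Suc m)"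
  show "\<exists>w\<in>{1..N}. R (Suc m) w \<and> R w u \<and> (\<forall>z\<in>{1..N}. R (Suc m) z \<longrightarrow> (R z u \<longleftrightarrow> z = w \<or> R z w))"
  proof (cases rule: vcases[OF u, case_names b1 n b3])
    case b1 thus ?thesis using Ru by (simp add: R_def)
  next
    case n thus ?thesis using Ru by (simp add: R_def)
  next
    case (b3 j)
    show ?thesis
    proof (intro bexI conjI ballI impI)
      show "R (Suc m) j" "R j u" using b3 by (auto simp: R_def)
      show "j \<in> {1..N}" using b3 by simp
      fix z assume z: "z \<in> {1..N}" and Rz: "R (Suc m) z"
      show "R z u = (z = j \<or> R z j)"
      proof (cases rule: vcases[OF z, case_names b1 n b3])
        case b1 thus ?thesis using b3 a01[of z j] by (cases "z = j") (auto simp: R_def)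
      qed (use Rz b3 in \<open>auto simp: R_def\<close>)
    qed
  qed
qed

lemma in_nb: assumes i: "i \<in> {1..m}" shows "\<exists>j\<in>{1..m}. A 1 j i = 1"
proof (rule ccontr)
  assume "\<not> ?thesis"
  hence "\<forall>j\<in>{1..m}. A 1 j i = 0" using a01 i by blast
  hence "(\<Sum>j=1..m. A 1 j i) = 0" by simp
  thus False using cols[OF i] k3 by simp
qed

lemma out_nb2: assumes i: "i \<in> {1..m}" and z: "z \<in> {1..m}"
  shows "\<exists>z'\<in>{1..m}. z' \<noteq> z \<and> A 1 i z' = 1"
proof (rule ccontr)
  assume "\<not> ?thesis"
  hence h: "\<forall>z'\<in>{1..m} - {z}. A 1 i z' = 0" using a01 i by blast
  have "(\<Sum>j=1..m. A 1 i j) = A 1 i z + (\<Sum>j\<in>{1..m} - {z}. A 1 i j)"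
    by (rule sum.remove) (use z in auto)
  also have "(\<Sum>j\<in>{1..m} - {z}. A 1 i j) = 0" using h by simp
  finally have "k = A 1 i z" using rows[OF i] by simp
  thus False using a01[OF i z] k3 by auto
qed

lemma not_P: assumes v: "v \<in> {1..N}" and ne: "v \<noteq> Suc m" shows "\<not> Pv v"
proof
  assume P: "Pv v"
  show False
  proof (cases rule: vcases[OF v, case_names b1 n b3])
    case b1
    define i where "i = v"
    have i: "i \<in> {1..m}" using b1 i_def by simp
    obtain j where j: "j\<in>{1..m}" and aji: "A 1 j i = 1" using in_nb[OF i] by blast
    have aij: "A 1 i j = 0" using anti[OF i j] aji adiag i by (cases "i = j") auto
    have "R j v" using i j aji i_def by (simp add: R_def)
    then obtain w where w: "w \<in> {1..N}" and Rvw: "R v w" and Rwj: "R w j"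
      and H: "\<And>z. z\<in>{1..N} \<Longrightarrow> R v z \<Longrightarrow> (R z j \<longleftrightarrow> z = w \<or> R z w)"
      using P j unfolding Pv_def by fastforce
    show False
    proof (cases rule: vcases[OF w, case_names b1 n b3])
      case b1
      have Rv: "R v (c3 m v)" using i i_def by (simp add: R_def)
      have cin: "c3 m v \<in> {1..N}" using i i_def c3_in by blast
      from H[OF cin Rv] i i_def b1 Rvw aij j show False by (simp add: R_def)
    next
      case n thus False using Rvw i i_def by (simp add: R_def)
    next
      case (b3 z)
      have zi: "z \<noteq> i" using b3 Rwj aij i j by (auto simp: R_def)
      have aiz: "A 1 i z = 1" using Rvw b3 i i_def zi by (simp add: R_def)
      obtain z2 where z2: "z2\<in>{1..m}" "z2 \<noteq> z" and aiz2: "A 1 i z2 = 1"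
        using out_nb2[OF i \<open>z\<in>{1..m}\<close>] by blast
      have z2i: "z2 \<noteq> i" using aiz2 adiag i by auto
      have h1: "A 1 z2 j = 1 \<longleftrightarrow> A 1 z2 z = 1"
        using H[of z2] z2 b3 i i_def aiz2 j by (simp add: R_def)
      have h2: "A 1 z2 j = 1 \<longleftrightarrow> A 1 z z2 = 1"
        using H[of "c3 m z2"] z2 z2i b3 i i_def aiz2 j by (simp add: R_def)
      show False using h1 h2 anti[of z2 z] a01[of z2 z] z2 b3 by auto
    qed
  next
    case n thus False using ne by simp
  next
    case (b3 i)
    note i = \<open>i\<in>{1..m}\<close>
    obtain j where j: "j\<in>{1..m}" and aji: "A 1 j i = 1" using in_nb[OF i] by blast
    have ji: "j \<noteq> i" using aji adiag i by auto
    have aij: "A 1 i j = 0" using anti[OF i j] aji ji by auto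
    have "R j v" using b3 j aji ji by (simp add: R_def)
    then obtain w where w: "w \<in> {1..N}" and Rvw: "R v w" and Rwj: "R w j"
      and H: "\<And>z. z\<in>{1..N} \<Longrightarrow> R v z \<Longrightarrow> (R z j \<longleftrightarrow> z = w \<or> R z w)"
      using P j unfolding Pv_def by fastforce
    have Hn: "Suc m = w \<or> R (Suc m) w" using H[of "Suc m"] b3 j by (simp add: R_def)
    show False
    proof (cases rule: vcases[OF w, case_names b1 n b3])
      case n
      have "R v (c3 m j)" using b3 j aji by (simp add: R_def)
      from H[OF _ this] j n show False by (simp add: R_def)
    next
      case (b3 z) thus False using Hn by (simp add: R_def)
    next
      case b1
      define j' where "j' = w"
      have j': "j' \<in> {1..m}" using b1 j'_def by simp
      have aij': "A 1 i j' = 1" using Rvw b3 j' j'_def by (simp add: R_def)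
      have aj'j: "A 1 j' j = 1" using Rwj j j' j'_def by (simp add: R_def)
      have j'j: "j' \<noteq> j" using aj'j adiag j by auto
      have imp: "A 1 z j' * A 1 z j = A 1 z j' - (if z = i then 1 else 0)" if z: "z \<in> {1..m}" for z
      proof (cases "z = i")
        case True thus ?thesis using aij' aij by simp
      next
        case False
        have "A 1 z j = 1" if "A 1 z j' = 1"
        proof (cases "A 1 i z = 1")
          case True
          thus ?thesis using H[of z] z b3 j j' that j'_def by (simp add: R_def)
        next
          case False
          hence "A 1 z i = 1" using anti[OF i z] a01[OF i z] \<open>z \<noteq> i\<close> by auto
          thus ?thesis using H[of "c3 m z"] z b3 j j' that j'_def by (simp add: R_def)
        qed
        thus ?thesis using False a01[OF z j'] by auto
      qed
      have "(\<Sum>z=1..m. A 1 z j' * A 1 z j) = (\<Sum>z=1..m. A 1 z j' - (if z = i then 1 else 0))"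
        by (rule sum.cong[OF refl]) (rule imp)
      also have "\<dots> = k - 1" using cols[OF j'] i by (simp add: sum_subtractf)
      finally have "k - 1 = l" using baA[OF j' j] j'j by simp
      thus False using kl k3 by simp
    qed
  qed
qed

lemma P_inv: assumes g: "g permutes {1..N}" and pres: "\<And>x y. x\<in>{1..N} \<Longrightarrow> y\<in>{1..N} \<Longrightarrow> B1 m A (g x) (g y) = B1 m A x y"
  and v: "v \<in> {1..N}" and P: "Pv v" shows "Pv (g v)"
  unfolding Pv_def
proof (intro ballI impI)
  have gin: "\<And>x. x \<in> {1..N} \<Longrightarrow> g x \<in> {1..N}" using permutes_in_image[OF g] by blast
  have Rg: "\<And>x y. x\<in>{1..N} \<Longrightarrow> y\<in>{1..N} \<Longrightarrow> R (g x) (g y) = R x y" using pres by (simp add: R_def)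
  have ginj: "\<And>x y. g x = g y \<longleftrightarrow> x = y" using g by (meson permutes_inj injD)
  fix u assume u: "u \<in> {1..N}" and Ru: "R u (g v)"
  obtain u' where u': "u' \<in> {1..N}" "u = g u'" using g u by (metis permutes_image imageE)
  have "R u' v" using Ru u' Rg v by simp
  then obtain w where w: "w \<in> {1..N}" and Rvw: "R v w" and Rwu: "R w u'"
      and H: "\<And>z. z\<in>{1..N} \<Longrightarrow> R v z \<Longrightarrow> (R z u' \<longleftrightarrow> z = w \<or> R z w)"
      using P u' unfolding Pv_def by fastforce
  show "\<exists>w\<in>{1..N}. R (g v) w \<and> R w u \<and> (\<forall>z\<in>{1..N}. R (g v) z \<longrightarrow> (R z u \<longleftrightarrow> z = w \<or> R z w))"
  proof (intro bexI conjI ballI impI)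
    show "g w \<in> {1..N}" using gin w .
    show "R (g v) (g w)" using Rg v w Rvw by simp
    show "R (g w) u" using Rg w u' Rwu by simp
    fix z assume z: "z \<in> {1..N}" and Rz: "R (g v) z"
    obtain z' where z': "z' \<in> {1..N}" "z = g z'" using g z by (metis permutes_image imageE)
    have "R v z'" using Rz z' Rg v by simp
    thus "R z u = (z = g w \<or> R z (g w))" using H[OF z'(1)] z' u' w Rg ginj by simp
  qed
qed

lemma fix_n: assumes g: "g permutes {1..N}" and pres: "\<And>x y. x\<in>{1..N} \<Longrightarrow> y\<in>{1..N} \<Longrightarrow> B1 m A (g x) (g y) = B1 m A x y"
  shows "g (Suc m) = Suc m"
proof (rule ccontr)
  assume ne: "g (Suc m) \<noteq> Suc m"
  have "g (Suc m) \<in> {1..N}" using permutes_in_image[OF g, of "Suc m"] by simp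
  moreover have "Pv (g (Suc m))" using P_inv[OF g pres _ P_n] by simp
  ultimately show False using not_P ne by blast
qed

end


lemma permmat_sum: assumes s: "\<sigma> permutes {1..N}" and x: "x \<in> {1..N}" and y: "y \<in> {1..N}"
  shows "(\<Sum>u=1..N. \<Sum>v=1..N. perm_mat \<sigma> u x * M u v * perm_mat \<sigma> v y) = M (\<sigma> x) (\<sigma> y)"
proof -
  have sx: "\<sigma> x \<in> {1..N}" and sy: "\<sigma> y \<in> {1..N}" using permutes_in_image[OF s] x y by auto
  have "(\<Sum>u=1..N. \<Sum>v=1..N. perm_mat \<sigma> u x * M u v * perm_mat \<sigma> v y)
      = (\<Sum>u=1..N. (if u = \<sigma> x then 1 else 0) * M u (\<sigma> y))"
  proof (rule sum.cong[OF refl])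
    fix u
    show "(\<Sum>v=1..N. perm_mat \<sigma> u x * M u v * perm_mat \<sigma> v y) = (if u = \<sigma> x then 1 else 0) * M u (\<sigma> y)"
      unfolding perm_mat_def using delta_r'[of "{1..N}" "\<lambda>v. (if u = \<sigma> x then 1 else 0) * M u v" "\<sigma> y"] sy by simp
  qed
  also have "\<dots> = M (\<sigma> x) (\<sigma> y)" using delta_l'[of "{1..N}" "\<sigma> x" "\<lambda>u. M u (\<sigma> y)"] sx by simp
  finally show ?thesis .
qed

lemma aut_set_iff: "\<sigma> \<in> aut_set N d F \<longleftrightarrow> \<sigma> permutes {1..N} \<and>
   (\<forall>i\<le>d. \<forall>x\<in>{1..N}. \<forall>y\<in>{1..N}. F i (\<sigma> x) (\<sigma> y) = F i x y)"
  unfolding aut_set_def using permmat_sum by auto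


lemma c3_gt_m[simp]: "\<not> c3 m j \<le> m" by (simp add: c3_def)


definition ext :: "nat \<Rightarrow> (nat \<Rightarrow> nat) \<Rightarrow> nat \<Rightarrow> nat" where
  "ext m \<sigma> x = (if x \<in> {1..m} then \<sigma> x else if Suc m < x \<and> x \<le> 2*m+1 then Suc m + \<sigma> (x - Suc m) else x)"

lemma ext_b1[simp]: "i \<in> {1..m} \<Longrightarrow> ext m \<sigma> i = \<sigma> i" by (simp add: ext_def)
lemma ext_n[simp]: "ext m \<sigma> (Suc m) = Suc m" by (simp add: ext_def)
lemma ext_b3[simp]: "j \<in> {1..m} \<Longrightarrow> ext m \<sigma> (c3 m j) = c3 m (\<sigma> j)" by (simp add: ext_def c3_def)
lemma ext_out: "x \<notin> {1..2*m+1} \<Longrightarrow> ext m \<sigma> x = x" by (auto simp: ext_def)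

lemma ext_permutes: assumes s: "\<sigma> permutes {1..m}" shows "ext m \<sigma> permutes {1..2*m+1}"
proof (rule inj_imp_permutes)
  have sin: "\<And>x. x \<in> {1..m} \<Longrightarrow> \<sigma> x \<in> {1..m}" using permutes_in_image[OF s] by blast
  have sinj: "\<And>x y. \<sigma> x = \<sigma> y \<longleftrightarrow> x = y" using s by (meson permutes_inj injD)
  show "inj_on (ext m \<sigma>) {1..2*m+1}"
  proof (rule inj_onI)
    fix x y assume x: "x \<in> {1..2*m+1}" and y: "y \<in> {1..2*m+1}" and e: "ext m \<sigma> x = ext m \<sigma> y"
    show "x = y"
    proof (cases rule: vcases[OF x, case_names b1 n b3])
      case b1 thus ?thesis using e sin[OF b1] sinj by (cases rule: vcases[OF y, case_names b1 n b3]) auto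
    next
      case n thus ?thesis using e sin by (cases rule: vcases[OF y, case_names b1 n b3]) auto
    next
      case (b3 i) thus ?thesis using e sin[OF b3(1)] sin sinj by (cases rule: vcases[OF y, case_names b1 n b3]) auto
    qed
  qed
  show "finite {1..2*m+1}" by simp
  fix x
  show "x \<in> {1..2*m+1} \<Longrightarrow> ext m \<sigma> x \<in> {1..2*m+1}"
  proof -
    assume x: "x \<in> {1..2*m+1}"
    show ?thesis
    proof (cases rule: vcases[OF x, case_names b1 n b3])
      case b1 thus ?thesis using sin[OF b1] by simp
    next
      case n thus ?thesis by simp
    next
      case (b3 i) thus ?thesis using sin[OF b3(1)] c3_in by simp
    qed
  qed
  show "x \<notin> {1..2*m+1} \<Longrightarrow> ext m \<sigma> x = x" by (rule ext_out)
qed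

lemma ext_comp: assumes s: "\<sigma> permutes {1..m}" and t: "\<tau> permutes {1..m}"
  shows "ext m (\<sigma> \<circ> \<tau>) = ext m \<sigma> \<circ> ext m \<tau>"
proof
  fix x
  have tin: "\<And>x. x \<in> {1..m} \<Longrightarrow> \<tau> x \<in> {1..m}" using permutes_in_image[OF t] by blast
  show "ext m (\<sigma> \<circ> \<tau>) x = (ext m \<sigma> \<circ> ext m \<tau>) x"
  proof (cases "x \<in> {1..2*m+1}")
    case True thus ?thesis by (cases rule: vcases) (use tin in auto)
  next
    case False thus ?thesis by (simp add: ext_out)
  qed
qed

lemma ext_inj: assumes s: "\<sigma> permutes {1..m}" and t: "\<tau> permutes {1..m}" and e: "ext m \<sigma> = ext m \<tau>"
  shows "\<sigma> = \<tau>"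
proof
  fix x
  show "\<sigma> x = \<tau> x"
  proof (cases "x \<in> {1..m}")
    case True thus ?thesis using fun_cong[OF e, of x] by simp
  next
    case False thus ?thesis using s t by (simp add: permutes_def)
  qed
qed


context drt begin

lemma Bfam1: "Bfam m A 1 = B1 m A" by (simp add: Bfam_def)

lemma autY_pres: assumes t: "\<tau> \<in> aut_set N 2 (Bfam m A)"
  shows "\<tau> permutes {1..N}" "\<And>x y. x\<in>{1..N} \<Longrightarrow> y\<in>{1..N} \<Longrightarrow> B1 m A (\<tau> x) (\<tau> y) = B1 m A x y"
proof -
  have h: "\<tau> permutes {1..N} \<and> (\<forall>i\<le>2. \<forall>x\<in>{1..N}. \<forall>y\<in>{1..N}. Bfam m A i (\<tau> x) (\<tau> y) = Bfam m A i x y)"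
    using t aut_set_iff by blast
  thus "\<tau> permutes {1..N}" by blast
  fix x y assume x: "x\<in>{1..N}" and y: "y\<in>{1..N}"
  have "Bfam m A 1 (\<tau> x) (\<tau> y) = Bfam m A 1 x y" using h x y by auto
  thus "B1 m A (\<tau> x) (\<tau> y) = B1 m A x y" by (simp only: Bfam1)
qed

lemma n1: "Suc m \<in> {1..N}" "(1::nat) \<in> {1..N}" "Suc m \<noteq> 1" using k3 mk by auto

lemma intrans: "\<not> transitive_on N (aut_set N 2 (Bfam m A))"
proof
  assume "transitive_on N (aut_set N 2 (Bfam m A))"
  then obtain g where g: "g \<in> aut_set N 2 (Bfam m A)" and g1: "g (Suc m) = 1"
    unfolding transitive_on_def using n1 by blast
  have "g (Suc m) = Suc m" using fix_n autY_pres[OF g] by blast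
  thus False using g1 n1 by simp
qed

lemma pres_from_B: assumes g: "g permutes {1..N}"
  and pres: "\<And>x y. x\<in>{1..N} \<Longrightarrow> y\<in>{1..N} \<Longrightarrow> B1 m A (g x) (g y) = B1 m A x y"
  shows "g \<in> aut_set N 2 (Bfam m A)"
  unfolding aut_set_iff
proof (intro conjI g allI impI ballI)
  fix i :: nat and x y assume i: "i \<le> 2" and x: "x\<in>{1..N}" and y: "y\<in>{1..N}"
  have ginj: "g x = g y \<longleftrightarrow> x = y" using g by (meson permutes_inj injD)
  consider "i = 0" | "i = 1" | "i = 2" using le2_cases[OF i] by blast
  thus "Bfam m A i (g x) (g y) = Bfam m A i x y"
  proof cases
    case 1 thus ?thesis using ginj by (simp add: Bfam_def)
  next
    case 2 thus ?thesis using pres[OF x y] by (simp add: Bfam_def)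
  next
    case 3 thus ?thesis using pres[OF y x] by (simp add: Bfam_def)
  qed
qed

lemma nonschur: "\<not> schurian N 2 (Bfam m A)"
proof
  assume "schurian N 2 (Bfam m A)"
  then obtain G where sg: "subgroup G (sym_group N)" and tr: "transitive_on N G"
    and eq: "{mat_restr N (Bfam m A i) | i. i \<le> 2} = {orbital_mat N G a b | a b. a \<in> {1..N} \<and> b \<in> {1..N}}"
    unfolding schurian_def by (elim exE conjE)
  have Gperm: "\<And>g. g \<in> G \<Longrightarrow> g permutes {1..N}"
    using subgroup.subset[OF sg] by (auto simp: sym_group_def)
  have idG: "id \<in> G" using subgroup.one_closed[OF sg] by (simp add: sym_group_def)
  have pres: "B1 m A (g x) (g y) = B1 m A x y" if gG: "g \<in> G" and x: "x\<in>{1..N}" and y: "y\<in>{1..N}" for g x y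
  proof -
    have gx: "g x \<in> {1..N}" and gy: "g y \<in> {1..N}" using permutes_in_image[OF Gperm[OF gG]] x y by auto
    have "orbital_mat N G x y \<in> {orbital_mat N G a b | a b. a \<in> {1..N} \<and> b \<in> {1..N}}"
      unfolding mem_Collect_eq by (intro exI[of _ x] exI[of _ y] conjI refl x y)
    hence "orbital_mat N G x y \<in> {mat_restr N (Bfam m A i) | i. i \<le> 2}" by (simp only: eq)
    then obtain i where i: "i \<le> 2" and mi': "orbital_mat N G x y = mat_restr N (Bfam m A i)"
      unfolding mem_Collect_eq by (elim exE conjE)
    note mi = mi'[symmetric]
    have e1: "\<exists>h\<in>G. h x = x \<and> h y = y" by (rule bexI[OF _ idG]) simp
    have "orbital_mat N G x y x y = 1" using x y e1 unfolding orbital_mat_def by simp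
    hence "mat_restr N (Bfam m A i) x y = 1" using mi by simp
    hence f1: "Bfam m A i x y = 1" using x y by (simp add: mat_restr_def)
    have e2: "\<exists>h\<in>G. h x = g x \<and> h y = g y" by (rule bexI[OF _ gG]) simp
    have "orbital_mat N G x y (g x) (g y) = 1" using gx gy e2 unfolding orbital_mat_def by simp
    hence "mat_restr N (Bfam m A i) (g x) (g y) = 1" using mi by simp
    hence f2: "Bfam m A i (g x) (g y) = 1" using gx gy by (simp add: mat_restr_def)
    consider "i = 0" | "i = 1" | "i = 2" using le2_cases[OF i] by blast
    thus ?thesis
    proof cases
      case 1
      have "x = y" using f1 1 by (simp add: Bfam_def split: if_splits)
      moreover have "g x = g y" using f2 1 by (simp add: Bfam_def split: if_splits)
      ultimately show ?thesis using Bdiag x gx by simp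
    next
      case 2 thus ?thesis using f1 f2 by (simp add: Bfam_def)
    next
      case 3
      have b1: "B1 m A y x = 1" using f1 3 by (simp add: Bfam_def)
      have b2: "B1 m A (g y) (g x) = 1" using f2 3 by (simp add: Bfam_def)
      have "x \<noteq> y" using b1 Bdiag x by auto
      moreover have "g x \<noteq> g y" using b2 Bdiag gx by auto
      ultimately show ?thesis using Banti[OF x y] Banti[OF gx gy] b1 b2 by simp
    qed
  qed
  obtain g where gG: "g \<in> G" and g1: "g (Suc m) = 1" using tr n1 unfolding transitive_on_def by blast
  have "g (Suc m) = Suc m" using fix_n[OF Gperm[OF gG]] pres[OF gG] by blast
  thus False using g1 n1 by simp
qed

end

context drt begin
lemma ext_aut: assumes s: "\<sigma> \<in> aut_set m 2 A" shows "ext m \<sigma> \<in> aut_set N 2 (Bfam m A)"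
proof -
  have sp: "\<sigma> permutes {1..m}" and ap: "\<And>x y. x\<in>{1..m} \<Longrightarrow> y\<in>{1..m} \<Longrightarrow> A 1 (\<sigma> x) (\<sigma> y) = A 1 x y"
    using s unfolding aut_set_iff by (auto dest!: spec[of _ 1])
  have sin: "\<And>x. x \<in> {1..m} \<Longrightarrow> \<sigma> x \<in> {1..m}" using permutes_in_image[OF sp] by blast
  have sinj: "\<And>x y. \<sigma> x = \<sigma> y \<longleftrightarrow> x = y" using sp by (meson permutes_inj injD)
  show ?thesis
  proof (rule pres_from_B[OF ext_permutes[OF sp]])
    fix x y assume x: "x\<in>{1..N}" and y: "y\<in>{1..N}"
    show "B1 m A (ext m \<sigma> x) (ext m \<sigma> y) = B1 m A x y"
    proof (cases rule: vcases[OF x, case_names b1 n b3])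
      case b1 thus ?thesis using sin[OF b1] by (cases rule: vcases[OF y, case_names b1 n b3]) (use sin ap sinj in auto)
    next
      case n thus ?thesis by (cases rule: vcases[OF y, case_names b1 n b3]) (use sin in auto)
    next
      case (b3 i) thus ?thesis using sin[OF b3(1)] by (cases rule: vcases[OF y, case_names b1 n b3]) (use sin ap sinj in auto)
    qed
  qed
qed

lemma restr_aut: assumes t: "\<tau> \<in> aut_set N 2 (Bfam m A)" shows "\<exists>\<sigma>\<in>aut_set m 2 A. ext m \<sigma> = \<tau>"
proof -
  have tp: "\<tau> permutes {1..N}" and tpres: "\<And>x y. x\<in>{1..N} \<Longrightarrow> y\<in>{1..N} \<Longrightarrow> B1 m A (\<tau> x) (\<tau> y) = B1 m A x y"
    using autY_pres[OF t] by auto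
  have tin: "\<And>x. x \<in> {1..N} \<Longrightarrow> \<tau> x \<in> {1..N}" using permutes_in_image[OF tp] by blast
  have tinj: "\<And>x y. \<tau> x = \<tau> y \<longleftrightarrow> x = y" using tp by (meson permutes_inj injD)
  have tn: "\<tau> (Suc m) = Suc m" using fix_n[OF tp tpres] .
  have tb1: "\<tau> x \<in> {1..m}" if x: "x \<in> {1..m}" for x
  proof -
    have "B1 m A (Suc m) (\<tau> x) = 1" using tpres[of "Suc m" x] x tn by simp
    thus ?thesis by (cases rule: vcases[OF tin[OF b1_in[OF x]], case_names b1 n b3]) auto
  qed
  have tb3: "\<exists>j'\<in>{1..m}. \<tau> (c3 m j) = c3 m j'" if j: "j \<in> {1..m}" for j
  proof -
    have "B1 m A (\<tau> (c3 m j)) (Suc m) = 1" using tpres[of "c3 m j" "Suc m"] j tn by simp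
    thus ?thesis by (cases rule: vcases[OF tin[OF c3_in[OF j]], case_names b1 n b3]) auto
  qed
  define \<sigma> where "\<sigma> x = (if x \<in> {1..m} then \<tau> x else x)" for x
  have sp: "\<sigma> permutes {1..m}"
  proof (rule inj_imp_permutes)
    show "inj_on \<sigma> {1..m}" by (rule inj_onI) (simp add: \<sigma>_def tinj)
    show "finite {1..m}" by simp
    fix x
    show "x \<in> {1..m} \<Longrightarrow> \<sigma> x \<in> {1..m}"
    proof -
      assume x: "x \<in> {1..m}"
      have "\<sigma> x = \<tau> x" using x by (simp add: \<sigma>_def)
      with tb1[OF x] show ?thesis by simp
    qed
    show "x \<notin> {1..m} \<Longrightarrow> \<sigma> x = x" unfolding \<sigma>_def by (simp only: if_False)
  qed
  have sap: "A 1 (\<sigma> x) (\<sigma> y) = A 1 x y" if x: "x\<in>{1..m}" and y: "y\<in>{1..m}" for x y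
    using tpres[of x y] x y tb1[OF x] tb1[OF y] by (simp add: \<sigma>_def)
  have sA: "\<sigma> \<in> aut_set m 2 A"
    unfolding aut_set_iff
  proof (intro conjI sp allI impI ballI)
    fix i :: nat and x y assume i: "i \<le> 2" and x: "x\<in>{1..m}" and y: "y\<in>{1..m}"
    have sx: "\<sigma> x \<in> {1..m}" "\<sigma> y \<in> {1..m}" using x y tb1 by (auto simp: \<sigma>_def)
    show "A i (\<sigma> x) (\<sigma> y) = A i x y"
      using le2_cases[OF i] sap[OF x y] sap[OF y x] A0[OF sx] A0[OF x y] A2[OF sx] A2[OF x y] x y
      by (auto simp: \<sigma>_def tinj)
  qed
  have "ext m \<sigma> = \<tau>"
  proof
    fix x
    show "ext m \<sigma> x = \<tau> x"
    proof (cases "x \<in> {1..N}")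
      case False thus ?thesis using tp ext_out[OF False] by (simp add: permutes_def)
    next
      case True
      thus ?thesis
      proof (cases rule: vcases[case_names b1 n b3])
        case b1 thus ?thesis by (simp add: \<sigma>_def)
      next
        case n thus ?thesis using tn by simp
      next
        case (b3 j)
        obtain j' where j': "j' \<in> {1..m}" and tj: "\<tau> (c3 m j) = c3 m j'" using tb3[OF b3(1)] by blast
        have tj1: "\<tau> j \<in> {1..m}" using tb1[OF b3(1)] .
        have "j' = \<tau> j"
        proof (rule ccontr)
          assume ne: "j' \<noteq> \<tau> j"
          have "B1 m A (\<tau> j) (\<tau> (c3 m j)) = B1 m A j (c3 m j)" using tpres[of j "c3 m j"] b3 by simp
          hence a1: "A 1 (\<tau> j) j' = 1" using tj tj1 j' b3 ne by simp
          have "j' \<in> \<sigma> ` {1..m}" using permutes_image[OF sp] j' by simp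
          then obtain z0 where z0: "z0 \<in> {1..m}" and jz: "j' = \<tau> z0" by (auto simp: \<sigma>_def)
          have "A 1 j z0 = 1" using sap[OF b3(1) z0] a1 jz b3(1) z0 by (simp add: \<sigma>_def)
          hence z0j: "z0 \<noteq> j" using adiag b3(1) by auto
          have az: "A 1 z0 j = 0" using anti[OF z0 b3(1) z0j] \<open>A 1 j z0 = 1\<close> by simp
          have "B1 m A (\<tau> z0) (\<tau> (c3 m j)) = B1 m A z0 (c3 m j)" using tpres[of z0 "c3 m j"] b3 z0 by simp
          thus False using tj jz j' z0 b3(1) z0j az by simp
        qed
        thus ?thesis using b3 tj tj1 by (simp add: \<sigma>_def)
      qed
    qed
  qed
  thus ?thesis using sA by blast
qed

end

context drt begin
lemma iso_XY: "aut_group m 2 A \<cong> aut_group N 2 (Bfam m A)"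
proof -
  have sp: "\<And>\<sigma>. \<sigma> \<in> aut_set m 2 A \<Longrightarrow> \<sigma> permutes {1..m}" unfolding aut_set_iff by blast
  have "ext m \<in> iso (aut_group m 2 A) (aut_group N 2 (Bfam m A))"
    unfolding iso_def hom_def
  proof (intro CollectI conjI)
    show "ext m \<in> carrier (aut_group m 2 A) \<rightarrow> carrier (aut_group N 2 (Bfam m A))"
      using ext_aut by (auto simp: aut_group_def)
    show "\<forall>x\<in>carrier (aut_group m 2 A). \<forall>y\<in>carrier (aut_group m 2 A).
        ext m (x \<otimes>\<^bsub>aut_group m 2 A\<^esub> y) = ext m x \<otimes>\<^bsub>aut_group N 2 (Bfam m A)\<^esub> ext m y"
      using ext_comp sp by (simp add: aut_group_def sym_group_def)
    show "bij_betw (ext m) (carrier (aut_group m 2 A)) (carrier (aut_group N 2 (Bfam m A)))"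
      unfolding bij_betw_def
    proof
      show "inj_on (ext m) (carrier (aut_group m 2 A))"
        by (rule inj_onI) (use ext_inj sp in \<open>auto simp: aut_group_def\<close>)
      show "ext m ` carrier (aut_group m 2 A) = carrier (aut_group N 2 (Bfam m A))"
        using ext_aut restr_aut by (auto simp: aut_group_def)
    qed
  qed
  thus ?thesis unfolding is_iso_def by blast
qed

end

theorem theorem4:
  fixes m :: nat and A :: "nat \<Rightarrow> mat"
  assumes "m \<ge> 7"
    and "nonsym_class2_scheme m A"
  shows "nonsym_class2_scheme (2*m+1) (Bfam m A)
    \<and> \<not> transitive_on (2*m+1) (aut_set (2*m+1) 2 (Bfam m A))
    \<and> \<not> schurian (2*m+1) 2 (Bfam m A)
    \<and> aut_group m 2 A \<cong> aut_group (2*m+1) 2 (Bfam m A)"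
proof -
  obtain k l where "drt m A k l" using derive_drt[OF assms] by blast
  then interpret drt m A k l .
  show ?thesis using Y_scheme intrans nonschur iso_XY by blast
qed


end
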